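(* For every $n\in\mathbb{N}_{\geq1}$, the maximally balanced tree $T_n^{mb}$ with $n$ leaves has minimal Colless index, i.e. $\mathcal{C}(T_n^{mb})=c_n$, where $c_n$ is the minimum of $\mathcal{C}(T)$ over all rooted binary trees $T$ with $n$ leaves.
   Context: A rooted binary tree with $n\geq 2$ leaves is a rooted tree whose root has degree 2 and all other internal nodes have degree 3; for $n=1$ it is a single node. For an internal node $v$ with children $v_1,v_2$, let $\kappa(v_i)$ be the number of leaves descending from $v_i$ ($1$ if $v_i$ is a leaf), and let $bal(v)=|\kappa(v_1)-\kappa(v_2)|$. The Colless index is $\mathcal{C}(T)=\sum_v bal(v)$ over all internal nodes $v$. A rooted binary tree is maximally balanced if $bal(v)\leq 1$ for every internal node $v$; for each $n$ there is (up to isomorphism) a unique such tree $T_n^{mb}$. *)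

theory Defs
  imports Main
begin

text \<open>Rooted binary trees (ordered representation; all quantities below are
invariant under swapping children, so this is harmless).\<close>
datatype btree = Leaf | Node btree btree

fun leaves :: "btree \<Rightarrow> nat" where
  "leaves Leaf = 1"
| "leaves (Node l r) = leaves l + leaves r"

definition bal :: "btree \<Rightarrow> btree \<Rightarrow> nat" where
  "bal l r = (if leaves l \<le> leaves r then leaves r - leaves l else leaves l - leaves r)"

fun colless :: "btree \<Rightarrow> nat" where
  "colless Leaf = 0"
| "colless (Node l r) = bal l r + colless l + colless r"

fun max_balanced :: "btree \<Rightarrow> bool" where
  "max_balanced Leaf = True"
| "max_balanced (Node l r) = (bal l r \<le> 1 \<and> max_balanced l \<and> max_balanced r)"

definition min_colless :: "nat \<Rightarrow> nat" where
  "min_colless n = Min (colless ` {T. leaves T = n})"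

end

theory Submission
  imports Defs
begin

fun mb :: "nat \<Rightarrow> btree" where
  "mb n = (if n \<le> 1 then Leaf else Node (mb (n div 2)) (mb (n - n div 2)))"

declare mb.simps[simp del]

fun cm :: "nat \<Rightarrow> nat" where
  "cm n = (if n \<le> 1 then 0 else n mod 2 + cm (n div 2) + cm (n - n div 2))"

declare cm.simps[simp del]

lemma cm0: "cm 0 = 0" and cm1: "cm 1 = 0" and cm1' [simp]: "cm (Suc 0) = 0" by (simp_all add: cm.simps)

lemma cm2 [simp]: "cm (Suc (Suc 0)) = 0" by (simp add: cm.simps)

lemma cm_even: "cm (2*m) = 2 * cm m"
proof (cases "m = 0")
  case True thus ?thesis by (simp add: cm0)
next
  case False
  hence "cm (2*m) = cm m + cm m" by (subst cm.simps) simp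
  thus ?thesis by simp
qed

lemma cm_odd: "m \<ge> 1 \<Longrightarrow> cm (2*m+1) = 1 + cm m + cm (m+1)"
  by (subst cm.simps) simp

lemma leaves_pos: "leaves T \<ge> 1"
  by (induction T) auto

lemma mb_props: "n \<ge> 1 \<Longrightarrow> leaves (mb n) = n \<and> max_balanced (mb n)"
proof (induction n rule: less_induct)
  case (less n)
  show ?case
  proof (cases "n \<le> 1")
    case True thus ?thesis using less.prems by (simp add: mb.simps)
  next
    case False
    have a: "leaves (mb (n div 2)) = n div 2 \<and> max_balanced (mb (n div 2))"
      using less.IH[of "n div 2"] False by simp
    have b: "leaves (mb (n - n div 2)) = n - n div 2 \<and> max_balanced (mb (n - n div 2))"
      using less.IH[of "n - n div 2"] False by simp
    have "mb n = Node (mb (n div 2)) (mb (n - n div 2))" using False by (subst mb.simps) simp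
    moreover have "bal (mb (n div 2)) (mb (n - n div 2)) \<le> 1"
      using False unfolding bal_def a[THEN conjunct1] b[THEN conjunct1] by presburger
    ultimately show ?thesis using a b False by simp
  qed
qed

lemma key:
  "int (cm (a+b)) \<le> int (cm a) + int (cm b) + \<bar>int a - int b\<bar>"
proof (induction "a+b" arbitrary: a b rule: less_induct)
  case less
  show ?case
  proof (cases "a = 0 \<or> b = 0")
    case True thus ?thesis by (auto simp: cm0)
  next
    case False
    hence a1: "a \<ge> 1" "b \<ge> 1" by auto
    obtain p i where pa: "a = 2*p + i" "i < 2" by (metis mod_less_divisor mult_div_mod_eq zero_less_numeral)
    obtain q j where qb: "b = 2*q + j" "j < 2" by (metis mod_less_divisor mult_div_mod_eq zero_less_numeral)
    consider "i = 0" "j = 0" | "i = 1" "j = 1" | "i = 0" "j = 1" | "i = 1" "j = 0"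
      using pa(2) qb(2) by linarith
    thus ?thesis
    proof cases
      case 1
      have "int (cm (p+q)) \<le> int (cm p) + int (cm q) + \<bar>int p - int q\<bar>"
        using less[of p q] pa qb 1 a1 by simp
      moreover have "a + b = 2*(p+q)" using pa qb 1 by simp
      hence "cm (a+b) = 2 * cm (p+q)" by (simp only: cm_even)
      ultimately show ?thesis using pa qb 1 by (simp add: cm_even)
    next
      case 2
      have ab: "a + b = 2*(p+q+1)" using pa qb 2 by simp
      show ?thesis
      proof (cases "p = 0 \<or> q = 0")
        case True
        then consider "p = 0" | "q = 0" by blast
        thus ?thesis
        proof cases
          case 1
          hence "a = 1" using pa 2 by simp
          show ?thesis
          proof (cases "q = 0")
            case True thus ?thesis using \<open>a = 1\<close> qb 2 by (simp add: cm_even[of 1, simplified] cm1)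
          next
            case False
            have h: "int (cm (1+q)) \<le> int (cm 1) + int (cm q) + \<bar>int 1 - int q\<bar>"
              using less[of 1 q] qb 2 False \<open>a = 1\<close> by simp
            have "cm b = 1 + cm q + cm (q+1)" using qb 2 False cm_odd[of q] by simp
            moreover have "a+b = 2 * (q+1)" using ab 1 by simp
            hence "cm (a+b) = 2 * cm (q+1)" by (simp only: cm_even)
            ultimately show ?thesis using h \<open>a = 1\<close> False qb \<open>j = 1\<close> by (simp add: cm1 add.commute)
          qed
        next
          case 2
          hence "b = 1" using qb \<open>j = 1\<close> by simp
          show ?thesis
          proof (cases "p = 0")
            case True thus ?thesis using \<open>b = 1\<close> pa \<open>i = 1\<close> by (simp add: cm_even[of 1, simplified] cm1)
          next
            case False
            have h: "int (cm (p+1)) \<le> int (cm p) + int (cm 1) + \<bar>int p - int 1\<bar>"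
              using less[of p 1] pa \<open>i=1\<close> False \<open>b = 1\<close> by simp
            have "cm a = 1 + cm p + cm (p+1)" using pa \<open>i=1\<close> False cm_odd[of p] by simp
            moreover have "a+b = 2 * (p+1)" using ab 2 by simp
            hence "cm (a+b) = 2 * cm (p+1)" by (simp only: cm_even)
            ultimately show ?thesis using h \<open>b = 1\<close> False pa \<open>i = 1\<close> by (simp add: cm1)
          qed
        qed
      next
        case False
        have h1: "int (cm (p+(q+1))) \<le> int (cm p) + int (cm (q+1)) + \<bar>int p - int (q+1)\<bar>"
          using less[of p "q+1"] pa qb 2 False by simp
        have h2: "int (cm ((p+1)+q)) \<le> int (cm (p+1)) + int (cm q) + \<bar>int (p+1) - int q\<bar>"
          using less[of "p+1" q] pa qb 2 False by simp
        have "cm a = 1 + cm p + cm (p+1)" using pa 2 False cm_odd[of p] by simp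
        moreover have "cm b = 1 + cm q + cm (q+1)" using qb 2 False cm_odd[of q] by simp
        moreover have "cm (a+b) = 2 * cm (p+q+1)" using ab by (simp only: cm_even)
        ultimately show ?thesis using h1 h2 pa qb 2
          by (simp add: add.assoc add.left_commute abs_if split: if_splits)
      qed
    next
      case 3
      show ?thesis
      proof (cases "q = 0")
        case True
        hence "b = 1" using qb 3 by simp
        hence p1: "p \<ge> 1" using pa 3 a1 by simp
        have "cm (a+b) = 1 + cm p + cm (p+1)" using pa 3 \<open>b=1\<close> cm_odd[OF p1] by simp
        moreover have "cm a = 2 * cm p" using pa 3 cm_even by simp
        moreover have "int (cm (p+1)) \<le> int (cm p) + int (cm 1) + \<bar>int p - int 1\<bar>"
          using less[of p 1] pa 3 \<open>b=1\<close> p1 by simp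
        ultimately show ?thesis using pa 3 \<open>b=1\<close> p1 by (simp add: cm1)
      next
        case False
        have p1: "p \<ge> 1" using pa 3 a1 by simp
        have h1: "int (cm (p+q)) \<le> int (cm p) + int (cm q) + \<bar>int p - int q\<bar>"
          using less[of p q] pa qb 3 False by simp
        have h2: "int (cm (p+(q+1))) \<le> int (cm p) + int (cm (q+1)) + \<bar>int p - int (q+1)\<bar>"
          using less[of p "q+1"] pa qb 3 False p1 by simp
        have "cm (a+b) = 1 + cm (p+q) + cm (p+q+1)" using pa qb 3 cm_odd[of "p+q"] p1
          by (simp add: add.assoc)
        moreover have "cm a = 2 * cm p" using pa 3 cm_even by simp
        moreover have "cm b = 1 + cm q + cm (q+1)" using qb 3 False cm_odd[of q] by simp
        ultimately show ?thesis using h1 h2 pa qb 3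
          by (simp add: add.assoc abs_if split: if_splits)
      qed
    next
      case 4
      show ?thesis
      proof (cases "p = 0")
        case True
        hence "a = 1" using pa 4 by simp
        hence q1: "q \<ge> 1" using qb 4 a1 by simp
        have "cm (a+b) = 1 + cm q + cm (q+1)" using qb 4 \<open>a=1\<close> cm_odd[OF q1] by simp
        moreover have "cm b = 2 * cm q" using qb 4 cm_even by simp
        moreover have "int (cm (1+q)) \<le> int (cm 1) + int (cm q) + \<bar>int 1 - int q\<bar>"
          using less[of 1 q] qb 4 \<open>a=1\<close> q1 by simp
        ultimately show ?thesis using qb 4 \<open>a=1\<close> q1 by (simp add: cm1 add.commute)
      next
        case False
        have q1: "q \<ge> 1" using qb 4 a1 by simp
        have h1: "int (cm (p+q)) \<le> int (cm p) + int (cm q) + \<bar>int p - int q\<bar>"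
          using less[of p q] pa qb 4 False by simp
        have h2: "int (cm ((p+1)+q)) \<le> int (cm (p+1)) + int (cm q) + \<bar>int (p+1) - int q\<bar>"
          using less[of "p+1" q] pa qb 4 False q1 by simp
        have "cm (a+b) = 1 + cm (p+q) + cm (p+q+1)" using pa qb 4 cm_odd[of "p+q"] q1
          by (simp add: add.assoc)
        moreover have "cm b = 2 * cm q" using qb 4 cm_even by simp
        moreover have "cm a = 1 + cm p + cm (p+1)" using pa 4 False cm_odd[of p] by simp
        ultimately show ?thesis using h1 h2 pa qb 4
          by (simp add: add.assoc abs_if split: if_splits)
      qed
    qed
  qed
qed

lemma colless_ge: "cm (leaves T) \<le> colless T"
proof (induction T)
  case Leaf thus ?case by (simp add: cm1)
next
  case (Node l r)
  have "int (cm (leaves l + leaves r)) \<le> int (cm (leaves l)) + int (cm (leaves r))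
        + \<bar>int (leaves l) - int (leaves r)\<bar>" by (rule key)
  moreover have "int (bal l r) = \<bar>int (leaves l) - int (leaves r)\<bar>" by (auto simp: bal_def)
  ultimately show ?case using Node by simp
qed

lemma colless_mb: "max_balanced T \<Longrightarrow> colless T = cm (leaves T)"
proof (induction T)
  case Leaf thus ?case by (simp add: cm1)
next
  case (Node l r)
  let ?a = "leaves l" and ?b = "leaves r"
  have a1: "?a \<ge> 1" "?b \<ge> 1" by (rule leaves_pos)+
  have bb: "bal l r \<le> 1" using Node.prems by simp
  have d: "?b = ?a \<or> ?b = ?a + 1 \<or> ?a = ?b + 1" using bb by (auto simp: bal_def split: if_splits)
  have "cm (?a + ?b) = bal l r + cm ?a + cm ?b"
  proof -
    consider "?b = ?a" | "?b = ?a + 1" | "?a = ?b + 1" using d by blast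
    thus ?thesis
    proof cases
      case 1
      have "cm (?a + ?b) = cm (2 * ?a)" using 1 by (simp add: mult_2)
      thus ?thesis using 1 cm_even[of ?a] by (simp add: bal_def)
    next
      case 2
      have "cm (?a + ?b) = cm (2 * ?a + 1)" using 2 by (simp add: mult_2)
      thus ?thesis using 2 cm_odd[OF a1(1)] by (simp add: bal_def)
    next
      case 3
      have "cm (?a + ?b) = cm (2 * ?b + 1)" using 3 by (simp add: mult_2)
      thus ?thesis using 3 cm_odd[OF a1(2)] by (simp add: bal_def)
    qed
  qed
  thus ?case using Node by simp
qed

lemma colless_bound: "colless T \<le> leaves T * leaves T"
proof (induction T)
  case Leaf thus ?case by simp
next
  case (Node l r)
  let ?a = "leaves l" and ?b = "leaves r"
  have a1: "?a \<ge> 1" "?b \<ge> 1" by (rule leaves_pos)+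
  have "bal l r \<le> ?a + ?b" unfolding bal_def by (simp split: if_splits; linarith)
  moreover have "?a + ?b \<le> 2 * ?a * ?b"
  proof -
    have "?a * 1 \<le> ?a * ?b" by (rule mult_le_mono2[OF a1(2)])
    moreover have "1 * ?b \<le> ?a * ?b" by (rule mult_le_mono1[OF a1(1)])
    ultimately have "?a \<le> ?a * ?b" "?b \<le> ?a * ?b" by simp_all
    thus ?thesis by (simp only: mult.assoc)
  qed
  ultimately have "colless (Node l r) \<le> ?a*?a + ?b*?b + 2*?a*?b" using Node by simp
  also have "\<dots> = (?a + ?b) * (?a + ?b)" by (simp add: algebra_simps)
  finally show ?case by simp
qed

theorem theorem4:
  fixes n :: nat
  assumes "n \<ge> 1"
  shows "(\<exists>T. max_balanced T \<and> leaves T = n) \<and>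
         (\<forall>T. max_balanced T \<and> leaves T = n \<longrightarrow> colless T = min_colless n)"
proof
  show "\<exists>T. max_balanced T \<and> leaves T = n" using mb_props[OF assms] by blast
next
  show "\<forall>T. max_balanced T \<and> leaves T = n \<longrightarrow> colless T = min_colless n"
  proof (intro allI impI)
    fix T assume T: "max_balanced T \<and> leaves T = n"
    have fin: "finite (colless ` {T. leaves T = n})"
      by (rule finite_subset[of _ "{..n*n}"]) (auto intro: order_trans[OF colless_bound])
    have "Min (colless ` {T. leaves T = n}) = colless T"
    proof (rule Min_eqI[OF fin])
      fix y assume "y \<in> colless ` {T. leaves T = n}"
      then obtain S where "leaves S = n" "y = colless S" by auto
      thus "colless T \<le> y" using colless_ge[of S] colless_mb[of T] T by simp
    next
      show "colless T \<in> colless ` {T. leaves T = n}" using T by auto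
    qed
    thus "colless T = min_colless n" by (simp add: min_colless_def)
  qed
qed

end
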